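(* Let $V$ be a finite nonempty set and $f:\{0,1\}^V\to\{0,1\}^V$. (1) $f$ is positive-circular if and only if $f$ is an even-self-dual and-net. (2) $f$ is negative-circular if and only if $f$ is an odd-self-dual and-net.
   Context: For $x,y\in\{0,1\}^V$, $x\oplus y$ is componentwise addition mod 2, $1$ is the all-ones point, $\|x\|$ the number of $1$s; $x$ is even (odd) if $\|x\|$ is. The conjugate is $\tilde f(x)=f(x)\oplus x$. $f$ is self-dual if $f(x\oplus1)=f(x)\oplus1$ for all $x$; even (odd) if $\tilde f(\{0,1\}^V)$ is exactly the set of even (odd) points; even-self-dual (odd-self-dual) if both even (odd) and self-dual. For $x^{j\alpha}$ the point equal to $x$ except its $j$-component is $\alpha$, the global interaction graph $G(f)$ is the signed digraph on $V$ with a positive (resp. negative) arc from $j$ to $i$ iff $f_i(x^{j1})-f_i(x^{j0})=1$ (resp. $=-1$) for at least one $x$. $G(f)$ is simple if there is at most one arc from $j$ to $i$ for all $i,j$. $f$ is an and-net if $G(f)$ is simple and for every $i\in V$ and $x$: $f_i(x)=1$ iff $G(f)$ has no positive arc $j\to i$ with $x_j=0$ and no negative arc $j\to i$ with $x_j=1$. A cycle is a subgraph with at most one arc between any ordered pair whose underlying unsigned digraph is a directed cycle; positive (negative) if it has an even (odd) number of negative arcs. $f$ is positive-circular (negative-circular) if $G(f)$ itself is a positive (negative) cycle through all vertices of $V$. *)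

theory Defs
  imports Main
begin

text \<open>Points of {0,1}^V are Boolean functions on a finite (hence nonempty) type 'v;
  True encodes 1 and False encodes 0.\<close>

definition xorp :: "('v \<Rightarrow> bool) \<Rightarrow> ('v \<Rightarrow> bool) \<Rightarrow> ('v \<Rightarrow> bool)" where
  "xorp x y = (\<lambda>i. x i \<noteq> y i)"

definition onep :: "'v \<Rightarrow> bool" where
  "onep = (\<lambda>_. True)"

definition weight :: "('v::finite \<Rightarrow> bool) \<Rightarrow> nat" where
  "weight x = card {i. x i}"

definition even_point :: "('v::finite \<Rightarrow> bool) \<Rightarrow> bool" where
  "even_point x \<longleftrightarrow> even (weight x)"

definition odd_point :: "('v::finite \<Rightarrow> bool) \<Rightarrow> bool" where
  "odd_point x \<longleftrightarrow> odd (weight x)"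

definition conjugate :: "(('v \<Rightarrow> bool) \<Rightarrow> ('v \<Rightarrow> bool)) \<Rightarrow> ('v \<Rightarrow> bool) \<Rightarrow> ('v \<Rightarrow> bool)" where
  "conjugate f x = xorp (f x) x"

definition self_dual :: "(('v \<Rightarrow> bool) \<Rightarrow> ('v \<Rightarrow> bool)) \<Rightarrow> bool" where
  "self_dual f \<longleftrightarrow> (\<forall>x. f (xorp x onep) = xorp (f x) onep)"

definition even_net :: "(('v::finite \<Rightarrow> bool) \<Rightarrow> ('v \<Rightarrow> bool)) \<Rightarrow> bool" where
  "even_net f \<longleftrightarrow> range (conjugate f) = {x. even_point x}"

definition odd_net :: "(('v::finite \<Rightarrow> bool) \<Rightarrow> ('v \<Rightarrow> bool)) \<Rightarrow> bool" where
  "odd_net f \<longleftrightarrow> range (conjugate f) = {x. odd_point x}"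

definition even_self_dual :: "(('v::finite \<Rightarrow> bool) \<Rightarrow> ('v \<Rightarrow> bool)) \<Rightarrow> bool" where
  "even_self_dual f \<longleftrightarrow> even_net f \<and> self_dual f"

definition odd_self_dual :: "(('v::finite \<Rightarrow> bool) \<Rightarrow> ('v \<Rightarrow> bool)) \<Rightarrow> bool" where
  "odd_self_dual f \<longleftrightarrow> odd_net f \<and> self_dual f"

text \<open>Arcs of the global interaction graph G(f): f_i(x^{j1}) - f_i(x^{j0}) = 1 (positive)
  or = -1 (negative) for some x.\<close>

definition pos_arc :: "(('v \<Rightarrow> bool) \<Rightarrow> ('v \<Rightarrow> bool)) \<Rightarrow> 'v \<Rightarrow> 'v \<Rightarrow> bool" where
  "pos_arc f j i \<longleftrightarrow> (\<exists>x. f (x(j := True)) i \<and> \<not> f (x(j := False)) i)"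

definition neg_arc :: "(('v \<Rightarrow> bool) \<Rightarrow> ('v \<Rightarrow> bool)) \<Rightarrow> 'v \<Rightarrow> 'v \<Rightarrow> bool" where
  "neg_arc f j i \<longleftrightarrow> (\<exists>x. \<not> f (x(j := True)) i \<and> f (x(j := False)) i)"

definition has_arc :: "(('v \<Rightarrow> bool) \<Rightarrow> ('v \<Rightarrow> bool)) \<Rightarrow> 'v \<Rightarrow> 'v \<Rightarrow> bool" where
  "has_arc f j i \<longleftrightarrow> pos_arc f j i \<or> neg_arc f j i"

definition simple_graph :: "(('v \<Rightarrow> bool) \<Rightarrow> ('v \<Rightarrow> bool)) \<Rightarrow> bool" where
  "simple_graph f \<longleftrightarrow> (\<forall>i j. \<not> (pos_arc f j i \<and> neg_arc f j i))"

definition and_net :: "(('v \<Rightarrow> bool) \<Rightarrow> ('v \<Rightarrow> bool)) \<Rightarrow> bool" where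
  "and_net f \<longleftrightarrow> simple_graph f \<and>
     (\<forall>i x. f x i \<longleftrightarrow>
        (\<not> (\<exists>j. pos_arc f j i \<and> \<not> x j)) \<and> (\<not> (\<exists>j. neg_arc f j i \<and> x j)))"

text \<open>G(f) is a cycle through all vertices: simple, and its underlying unsigned digraph is
  a directed Hamiltonian cycle, i.e. the arcs are exactly j \<rightarrow> s j for a successor map s
  with a single orbit covering all vertices.\<close>

definition hamiltonian_cycle_succ :: "(('v \<Rightarrow> bool) \<Rightarrow> ('v \<Rightarrow> bool)) \<Rightarrow> ('v \<Rightarrow> 'v) \<Rightarrow> bool" where
  "hamiltonian_cycle_succ f s \<longleftrightarrow>
     simple_graph f \<and> (\<forall>i j. has_arc f j i \<longleftrightarrow> i = s j) \<and> (\<forall>i j. \<exists>n. (s ^^ n) i = j)"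

definition positive_circular :: "(('v::finite \<Rightarrow> bool) \<Rightarrow> ('v \<Rightarrow> bool)) \<Rightarrow> bool" where
  "positive_circular f \<longleftrightarrow>
     (\<exists>s. hamiltonian_cycle_succ f s \<and> even (card {j. neg_arc f j (s j)}))"

definition negative_circular :: "(('v::finite \<Rightarrow> bool) \<Rightarrow> ('v \<Rightarrow> bool)) \<Rightarrow> bool" where
  "negative_circular f \<longleftrightarrow>
     (\<exists>s. hamiltonian_cycle_succ f s \<and> odd (card {j. neg_arc f j (s j)}))"

end

theory Submission
  imports Defs
begin

lemma par_xor:
  assumes "finite A"
  shows "odd (card {j\<in>A. P j \<noteq> Q j}) = (odd (card {j\<in>A. P j}) \<noteq> odd (card {j\<in>A. Q j}))"
  using assms
proof (induction A rule: finite_induct)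
  case empty then show ?case by simp
next
  case (insert a A)
  have e: "\<And>R. {j\<in>insert a A. R j} = (if R a then insert a {j\<in>A. R j} else {j\<in>A. R j})"
    by auto
  have c: "\<And>R. card (insert a {j\<in>A. R j}) = Suc (card {j\<in>A. R j})"
    using insert by (simp add: card_insert_disjoint)
  have e1: "{j\<in>insert a A. P j \<noteq> Q j} = (if P a \<noteq> Q a then insert a {j\<in>A. P j \<noteq> Q j} else {j\<in>A. P j \<noteq> Q j})"
    by (rule e)
  have e2: "{j\<in>insert a A. P j} = (if P a then insert a {j\<in>A. P j} else {j\<in>A. P j})"
    by (rule e)
  have e3: "{j\<in>insert a A. Q j} = (if Q a then insert a {j\<in>A. Q j} else {j\<in>A. Q j})"
    by (rule e)
  show ?case unfolding e1 e2 e3 using insert.IH c[of "\<lambda>j. P j \<noteq> Q j"] c[of P] c[of Q]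
    by (cases "P a"; cases "Q a") auto
qed

lemma par_xor_U:
  "odd (card {j::'v::finite. P j \<noteq> Q j}) = (odd (card {j. P j}) \<noteq> odd (card {j. Q j}))"
  using par_xor[of "UNIV::'v set" P Q] by simp

lemma card_reindex:
  assumes "inj s" "s ` C = C"
  shows "card {j\<in>C. P (s j)} = card {k\<in>C. P k}"
proof -
  have "{k\<in>C. P k} = s ` {j\<in>C. P (s j)}"
  proof
    show "{k \<in> C. P k} \<subseteq> s ` {j \<in> C. P (s j)}"
    proof
      fix k assume k: "k \<in> {k \<in> C. P k}"
      then have "k \<in> s ` C" using assms(2) by simp
      then obtain j where "j \<in> C" "k = s j" by blast
      then show "k \<in> s ` {j \<in> C. P (s j)}" using k by blast
    qed
    show "s ` {j \<in> C. P (s j)} \<subseteq> {k \<in> C. P k}" using assms(2) by blast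
  qed
  then show ?thesis using card_image[OF inj_on_subset[OF assms(1) subset_UNIV]] by simp
qed

lemma no_arc_eq:
  assumes "\<not> has_arc f d i"
  shows "f (z(d:=a)) i = f (z(d:=c)) i"
proof -
  have "\<And>z. f (z(d:=True)) i = f (z(d:=False)) i"
    using assms unfolding has_arc_def pos_arc_def neg_arc_def by blast
  then show ?thesis by (cases a; cases c) auto
qed

lemma dep_aux:
  assumes na: "\<forall>k. k \<noteq> j \<longrightarrow> \<not> has_arc f k i"
  shows "finite D \<Longrightarrow> \<forall>x. (\<forall>k. x k \<noteq> y k \<longrightarrow> k \<in> D) \<longrightarrow> x j = y j \<longrightarrow> f x i = f y i"
proof (induction D rule: finite_induct)
  case empty
  show ?case
  proof (intro allI impI)
    fix x assume "\<forall>k. x k \<noteq> y k \<longrightarrow> k \<in> {}"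
    then have "x = y" by (intro ext) blast
    then show "f x i = f y i" by simp
  qed
next
  case (insert d D)
  show ?case
  proof (intro allI impI)
    fix x assume h1: "\<forall>k. x k \<noteq> y k \<longrightarrow> k \<in> insert d D" and h2: "x j = y j"
    define x' where "x' = x(d := y d)"
    have a1: "\<forall>k. x' k \<noteq> y k \<longrightarrow> k \<in> D"
    proof (intro allI impI)
      fix k assume "x' k \<noteq> y k"
      then have "k \<noteq> d" "x k \<noteq> y k" unfolding x'_def by (auto split: if_splits)
      then show "k \<in> D" using h1 by blast
    qed
    have a2: "x' j = y j" using h2 unfolding x'_def by simp
    have "f x' i = f y i" using insert.IH a1 a2 by blast
    moreover have "f x i = f x' i"
    proof (cases "d = j")
      case True
      have "x' = x" unfolding x'_def using True h2 by (intro ext) simp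
      then show ?thesis by simp
    next
      case False
      then have "\<not> has_arc f d i" using na by blast
      then have "f (x(d := x d)) i = f (x(d := y d)) i" by (rule no_arc_eq)
      then show ?thesis by (simp add: x'_def)
    qed
    ultimately show "f x i = f y i" by simp
  qed
qed

lemma dep:
  fixes f :: "('v::finite \<Rightarrow> bool) \<Rightarrow> ('v \<Rightarrow> bool)"
  assumes "\<forall>k. k \<noteq> j \<longrightarrow> \<not> has_arc f k i" "x j = y j"
  shows "f x i = f y i"
proof -
  have fin: "finite (UNIV :: 'v set)" by simp
  have "\<forall>x. (\<forall>k. x k \<noteq> y k \<longrightarrow> k \<in> UNIV) \<longrightarrow> x j = y j \<longrightarrow> f x i = f y i"
    by (rule dep_aux[OF assms(1) fin])
  then show ?thesis using assms(2) by blast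
qed
lemma orb_bij:
  fixes s :: "'v::finite \<Rightarrow> 'v"
  assumes "\<forall>i j. \<exists>n. (s^^n) i = j"
  shows "bij s"
proof -
  have "surj s"
  proof -
    have "i \<in> range s" for i
    proof -
      obtain n where n: "(s^^n) (s i) = i" using assms by blast
      show ?thesis
      proof (cases n)
        case 0 then have "s i = i" using n by simp
        then show ?thesis by (metis rangeI)
      next
        case (Suc m) then have "s ((s^^m) (s i)) = i" using n by simp
        then show ?thesis by (metis rangeI)
      qed
    qed
    then show ?thesis by blast
  qed
  then show ?thesis using finite_UNIV_surj_inj[of s] by (simp add: bij_def)
qed


lemma LF_pos:
  assumes bij: "bij s" and lf: "\<And>x j. f x (s j) = (x j = b j)"
  shows "pos_arc f k i \<longleftrightarrow> (i = s k \<and> b k)"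
proof -
  obtain j where i: "i = s j" using bij unfolding bij_def surj_def by blast
  have "pos_arc f k (s j) \<longleftrightarrow> (k = j \<and> b k)"
    unfolding pos_arc_def lf by (cases "k = j") auto
  moreover have "s k = s j \<longleftrightarrow> k = j" using bij by (meson bij_def inj_eq)
  ultimately show ?thesis using i by auto
qed

lemma LF_neg:
  assumes bij: "bij s" and lf: "\<And>x j. f x (s j) = (x j = b j)"
  shows "neg_arc f k i \<longleftrightarrow> (i = s k \<and> \<not> b k)"
proof -
  obtain j where i: "i = s j" using bij unfolding bij_def surj_def by blast
  have "neg_arc f k (s j) \<longleftrightarrow> (k = j \<and> \<not> b k)"
    unfolding neg_arc_def lf by (cases "k = j") auto
  moreover have "s k = s j \<longleftrightarrow> k = j" using bij by (meson bij_def inj_eq)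
  ultimately show ?thesis using i by auto
qed

lemma LF_props:
  assumes bij: "bij s" and lf: "\<And>x j. f x (s j) = (x j = b j)"
  shows "\<And>k i. has_arc f k i \<longleftrightarrow> i = s k" "simple_graph f" "and_net f" "self_dual f"
    "\<And>j. neg_arc f j (s j) \<longleftrightarrow> \<not> b j"
proof -
  note P = LF_pos[OF bij lf] and N = LF_neg[OF bij lf]
  show "\<And>k i. has_arc f k i \<longleftrightarrow> i = s k" unfolding has_arc_def P N by auto
  show sg: "simple_graph f" unfolding simple_graph_def P N by auto
  show "\<And>j. neg_arc f j (s j) \<longleftrightarrow> \<not> b j" unfolding N by auto
  have fx: "f x i \<longleftrightarrow> (\<not> (\<exists>j. pos_arc f j i \<and> \<not> x j)) \<and> (\<not> (\<exists>j. neg_arc f j i \<and> x j))" for x i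
  proof -
    obtain k where i: "i = s k" using bij unfolding bij_def surj_def by blast
    have inj: "\<And>j. s k = s j \<longleftrightarrow> j = k" using bij by (metis bij_def inj_eq)
    show ?thesis unfolding P N i lf by (simp add: inj) blast
  qed
  show "and_net f" unfolding and_net_def using sg fx by blast
  have "f (xorp x onep) i = xorp (f x) onep i" for x i
  proof -
    obtain k where i: "i = s k" using bij unfolding bij_def surj_def by blast
    show ?thesis unfolding i lf by (simp add: xorp_def onep_def lf) blast
  qed
  then show "self_dual f" unfolding self_dual_def by blast
qed

lemma LF_par:
  assumes inj: "inj s" and fin: "finite C" and sC: "s ` C = C" and lf: "\<And>x j. f x (s j) = (x j = b j)"
  shows "odd (card {k\<in>C. conjugate f x k}) = odd (card {j\<in>C. \<not> b j})"
proof -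
  have 0: "card {j\<in>C. conjugate f x (s j)} = card {k\<in>C. conjugate f x k}"
    by (rule card_reindex[OF inj sC])
  have e: "conjugate f x (s j) = ((x j \<noteq> (\<not> b j)) \<noteq> x (s j))" for j
    unfolding conjugate_def xorp_def lf by blast
  have 1: "odd (card {j\<in>C. (x j \<noteq> (\<not> b j)) \<noteq> x (s j)}) =
     (odd (card {j\<in>C. x j \<noteq> (\<not> b j)}) \<noteq> odd (card {j\<in>C. x (s j)}))"
    by (rule par_xor[OF fin])
  have 2: "odd (card {j\<in>C. x j \<noteq> (\<not> b j)}) = (odd (card {j\<in>C. x j}) \<noteq> odd (card {j\<in>C. \<not> b j}))"
    by (rule par_xor[OF fin])
  have 3: "card {j\<in>C. x (s j)} = card {j\<in>C. x j}" by (rule card_reindex[OF inj sC])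
  have 4: "odd (card {k\<in>C. conjugate f x k}) = odd (card {j\<in>C. (x j \<noteq> (\<not> b j)) \<noteq> x (s j)})"
    unfolding 0[symmetric] e ..
  show ?thesis unfolding 4 1 2 3 by blast
qed

lemma LF_fiber:
  assumes lf: "\<And>x j. f x (s j) = (x j = b j)" and orb: "\<forall>i j. \<exists>n. (s^^n) i = j"
    and eq: "conjugate f x = conjugate f y"
  shows "y = x \<or> y = (\<lambda>j. \<not> x j)"
proof -
  have d: "(x (s j) = y (s j)) = (x j = y j)" for j
  proof -
    have "conjugate f x (s j) = conjugate f y (s j)" using eq by simp
    then have "((x j = b j) \<noteq> x (s j)) = ((y j = b j) \<noteq> y (s j))"
      by (simp add: conjugate_def xorp_def lf)
    then show ?thesis by (cases "x j"; cases "y j"; cases "b j"; cases "x (s j)"; cases "y (s j)") auto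
  qed
  have it: "(x ((s^^n) i) = y ((s^^n) i)) = (x i = y i)" for n i
    by (induction n) (auto simp: d)
  define i0 :: 'a where "i0 = undefined"
  have c: "(x j = y j) = (x i0 = y i0)" for j
  proof -
    obtain n where "(s^^n) i0 = j" using orb by blast
    then show ?thesis using it[of n i0] by simp
  qed
  show ?thesis
  proof (cases "x i0 = y i0")
    case True then have "y = x" using c by (intro ext) auto
    then show ?thesis by simp
  next
    case False then have "y = (\<lambda>j. \<not> x j)" using c by (intro ext) auto
    then show ?thesis by simp
  qed
qed

lemma count:
  fixes g :: "('v::finite \<Rightarrow> bool) \<Rightarrow> ('v \<Rightarrow> bool)"
  assumes sub: "range g \<subseteq> {z. odd (weight z) = q}"
    and fib: "\<And>x y. g x = g y \<Longrightarrow> y = x \<or> y = (\<lambda>j. \<not> x j)"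
  shows "range g = {z. odd (weight z) = q}"
proof -
  define E where "E = {z::'v\<Rightarrow>bool. odd (weight z) = q}"
  define i0 :: 'v where "i0 = undefined"
  define flip where "flip = (\<lambda>z::'v\<Rightarrow>bool. z(i0 := \<not> z i0))"
  have fw: "odd (weight (flip z)) = (\<not> odd (weight z))" for z
  proof -
    have "flip z = (\<lambda>j. z j \<noteq> (j = i0))" unfolding flip_def by (intro ext) auto
    then have "weight (flip z) = card {j. z j \<noteq> (j = i0)}" by (simp add: weight_def)
    then show ?thesis using par_xor_U[of z "\<lambda>j. j = i0"] by (simp add: weight_def)
  qed
  have ff: "flip (flip z) = z" for z unfolding flip_def by (intro ext) auto
  have inj: "inj flip" by (metis ff injI)
  have im: "flip ` E = -E"
  proof
    show "flip ` E \<subseteq> - E" using fw unfolding E_def by auto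
    show "- E \<subseteq> flip ` E"
    proof
      fix z assume "z \<in> -E"
      then have "flip z \<in> E" using fw unfolding E_def by auto
      then show "z \<in> flip ` E" using ff by (metis image_eqI)
    qed
  qed
  have cE: "card (-E) = card E" using im card_image[OF inj_on_subset[OF inj subset_UNIV]] by metis
  have cU: "card (UNIV::('v\<Rightarrow>bool) set) = card E + card (-E)"
  proof -
    have "card (E \<union> -E) = card E + card (-E)" by (rule card_Un_disjoint) auto
    then show ?thesis by simp
  qed
  have U: "(UNIV::('v\<Rightarrow>bool) set) = (\<Union>y\<in>range g. g -` {y})" by auto
  have "card (UNIV::('v\<Rightarrow>bool) set) \<le> (\<Sum>y\<in>range g. card (g -` {y}))"
    by (subst U) (rule card_UN_le, simp)
  also have "\<dots> \<le> of_nat (card (range g)) * 2"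
  proof (rule sum_bounded_above)
    fix y assume "y \<in> range g"
    then obtain x0 where y: "y = g x0" by blast
    have "g -` {y} \<subseteq> {x0, \<lambda>j. \<not> x0 j}" using fib y by auto
    then have "card (g -` {y}) \<le> card {x0, \<lambda>j. \<not> x0 j}" by (rule card_mono[rotated]) simp
    also have "\<dots> \<le> 2" by (simp add: card_insert_if)
    finally show "card (g -` {y}) \<le> 2" .
  qed
  finally have "card E \<le> card (range g)" using cU cE by simp
  moreover have "range g \<subseteq> E" using sub unfolding E_def .
  ultimately have "range g = E" using card_seteq[of E "range g"] by simp
  then show ?thesis unfolding E_def .
qed



lemma fwd:
  fixes f :: "('v::finite \<Rightarrow> bool) \<Rightarrow> ('v \<Rightarrow> bool)"
  assumes H: "hamiltonian_cycle_succ f s"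
  shows "self_dual f \<and> and_net f \<and>
    range (conjugate f) = {z. odd (weight z) = odd (card {j. neg_arc f j (s j)})}"
proof -
  have sg: "simple_graph f" and arcs: "\<And>i j. has_arc f j i \<longleftrightarrow> i = s j"
    and orb: "\<forall>i j. \<exists>n. (s^^n) i = j"
    using H unfolding hamiltonian_cycle_succ_def by blast+
  have bij: "bij s" by (rule orb_bij[OF orb])
  have injs: "\<And>a c. s a = s c \<longleftrightarrow> a = c" using bij by (metis bij_def inj_eq)
  define b where "b j = pos_arc f j (s j)" for j
  have lf: "f x (s j) = (x j = b j)" for x j
  proof -
    have na: "\<forall>k. k \<noteq> j \<longrightarrow> \<not> has_arc f k (s j)"
    proof (intro allI impI)
      fix k assume "k \<noteq> j" then show "\<not> has_arc f k (s j)" unfolding arcs injs by simp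
    qed
    have dp: "\<And>y z. y j = z j \<Longrightarrow> f y (s j) = f z (s j)" by (rule dep[OF na])
    have ha: "has_arc f j (s j)" unfolding arcs by simp
    show ?thesis
    proof (cases "pos_arc f j (s j)")
      case True
      then obtain x0 where T: "f (x0(j:=True)) (s j)" and F: "\<not> f (x0(j:=False)) (s j)"
        unfolding pos_arc_def by blast
      have "f x (s j) = f (x0(j := x j)) (s j)" by (rule dp) simp
      then have "f x (s j) = x j" using T F by (cases "x j") auto
      then show ?thesis using True by (simp add: b_def)
    next
      case False
      then have N: "neg_arc f j (s j)" using ha unfolding has_arc_def by blast
      then obtain x0 where T: "\<not> f (x0(j:=True)) (s j)" and F: "f (x0(j:=False)) (s j)"
        unfolding neg_arc_def by blast
      have "f x (s j) = f (x0(j := x j)) (s j)" by (rule dp) simp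
      then have "f x (s j) = (\<not> x j)" using T F by (cases "x j") auto
      then show ?thesis using False by (simp add: b_def)
    qed
  qed
  note props = LF_props[OF bij lf]
  have negc: "{j. neg_arc f j (s j)} = {j. \<not> b j}" using props(5) by blast
  have inj: "inj s" using bij by (simp add: bij_def)
  have sU: "s ` UNIV = UNIV" using bij by (simp add: bij_def)
  have par: "odd (weight (conjugate f x)) = odd (card {j. \<not> b j})" for x
    using LF_par[OF inj finite_UNIV sU lf, of x] by (simp add: weight_def)
  have "range (conjugate f) = {z. odd (weight z) = odd (card {j. \<not> b j})}"
  proof (rule count)
    show "range (conjugate f) \<subseteq> {z. odd (weight z) = odd (card {j. \<not> b j})}" using par by auto
    show "\<And>x y. conjugate f x = conjugate f y \<Longrightarrow> y = x \<or> y = (\<lambda>j. \<not> x j)"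
      by (rule LF_fiber[OF lf orb])
  qed
  then show ?thesis using props negc by simp
qed



lemma bwd:
  fixes f :: "('v::finite \<Rightarrow> bool) \<Rightarrow> ('v \<Rightarrow> bool)"
  assumes sd: "self_dual f" and an: "and_net f"
    and rg: "range (conjugate f) = {z. odd (weight z) = q}"
  shows "\<exists>s. hamiltonian_cycle_succ f s \<and> odd (card {j. neg_arc f j (s j)}) = q"
proof -
  have sg: "\<And>i j. \<not> (pos_arc f j i \<and> neg_arc f j i)"
    using an unfolding and_net_def simple_graph_def by blast
  have fx: "\<And>x i. f x i \<longleftrightarrow> (\<not> (\<exists>j. pos_arc f j i \<and> \<not> x j)) \<and> (\<not> (\<exists>j. neg_arc f j i \<and> x j))"
    using an unfolding and_net_def by blast
  have sdi: "\<And>x i. f (\<lambda>l. \<not> x l) i = (\<not> f x i)"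
  proof -
    fix x i
    have "f (xorp x onep) i = xorp (f x) onep i" using sd unfolding self_dual_def by simp
    moreover have "xorp x onep = (\<lambda>l. \<not> x l)" by (simp add: xorp_def onep_def)
    ultimately show "f (\<lambda>l. \<not> x l) i = (\<not> f x i)" by (simp add: xorp_def onep_def)
  qed
  have ex: "\<exists>j. has_arc f j i" for i
  proof (rule ccontr)
    assume "\<not> (\<exists>j. has_arc f j i)"
    then have "\<And>j. \<not> pos_arc f j i" "\<And>j. \<not> neg_arc f j i" unfolding has_arc_def by blast+
    then have "\<And>x. f x i" using fx by presburger
    then show False using sdi[of "\<lambda>_. True" i] by simp
  qed
  have un: "j = k" if hj: "has_arc f j i" and hk: "has_arc f k i" for i j k
  proof (rule ccontr)
    assume jk: "j \<noteq> k"
    define x where "x = (\<lambda>l. if l = j then neg_arc f j i else pos_arc f k i)"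
    have xj: "x j = neg_arc f j i" and xk: "x k = pos_arc f k i" using jk by (auto simp: x_def)
    have "\<not> f x i"
    proof (cases "pos_arc f j i")
      case True
      then have "\<not> x j" using sg[of j i] xj by simp
      then have "\<exists>j'. pos_arc f j' i \<and> \<not> x j'" using True by blast
      then show ?thesis using fx[of x i] by simp
    next
      case False
      then have "neg_arc f j i" using hj unfolding has_arc_def by simp
      then have "\<exists>j'. neg_arc f j' i \<and> x j'" using xj by blast
      then show ?thesis using fx[of x i] by simp
    qed
    moreover have "\<not> f (\<lambda>l. \<not> x l) i"
    proof (cases "pos_arc f k i")
      case True
      then have "\<exists>j'. pos_arc f j' i \<and> \<not> \<not> x j'" using xk by blast
      then show ?thesis using fx[of "\<lambda>l. \<not> x l" i] by simp
    next
      case False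
      then have N: "neg_arc f k i" using hk unfolding has_arc_def by simp
      have "\<not> x k" using xk False by simp
      then have "\<exists>j'. neg_arc f j' i \<and> \<not> x j'" using N by blast
      then show ?thesis using fx[of "\<lambda>l. \<not> x l" i] by simp
    qed
    ultimately show False using sdi[of x i] by simp
  qed
  define p where "p i = (SOME j. has_arc f j i)" for i
  have hp: "has_arc f (p i) i" for i unfolding p_def using ex by (rule someI_ex)
  have hpu: "has_arc f j i \<longleftrightarrow> j = p i" for i j using hp un by blast
  define b where "b i = pos_arc f (p i) i" for i
  have posu: "pos_arc f j i \<longleftrightarrow> (j = p i \<and> b i)" for i j
    using hpu[of j i] unfolding has_arc_def b_def by blast
  have negu: "neg_arc f j i \<longleftrightarrow> (j = p i \<and> \<not> b i)" for i j
    using hpu[of j i] sg[of j i] hp[of i] unfolding has_arc_def b_def by blast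
  have lfp: "f x i = (x (p i) = b i)" for x i
  proof -
    have "f x i \<longleftrightarrow> (\<not> (\<exists>j. (j = p i \<and> b i) \<and> \<not> x j)) \<and> (\<not> (\<exists>j. (j = p i \<and> \<not> b i) \<and> x j))"
      using fx[of x i] unfolding posu negu .
    then show ?thesis by auto
  qed
  have cz: "conjugate f z i = ((z (p i) = b i) \<noteq> z i)" for z i
    by (simp add: conjugate_def xorp_def lfp)
  have inr: "odd (weight (conjugate f z)) = q" for z
  proof -
    have "conjugate f z \<in> range (conjugate f)" by simp
    then show ?thesis using rg by auto
  qed
  have surjp: "surj p"
  proof -
    have "j \<in> range p" for j
    proof (rule ccontr)
      assume "j \<notin> range p"
      then have nj: "\<And>i. p i \<noteq> j" by auto
      define e where "e = (\<lambda>k::'v. k = j)"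
      define z0 where "z0 = (\<lambda>k::'v. False)"
      have "conjugate f e = (\<lambda>i. conjugate f z0 i \<noteq> (i = j))"
        by (intro ext) (simp add: cz e_def z0_def nj)
      then have "weight (conjugate f e) = card {i. conjugate f z0 i \<noteq> (i = j)}"
        by (simp add: weight_def)
      then have "odd (weight (conjugate f e)) = (odd (weight (conjugate f z0)) \<noteq> odd (card {i::'v. i = j}))"
        using par_xor_U[of "conjugate f z0" "\<lambda>i. i = j"] by (simp add: weight_def)
      then show False using inr[of e] inr[of z0] by simp
    qed
    then show ?thesis by blast
  qed
  have bijp: "bij p" using surjp finite_UNIV_surj_inj[of p] by (simp add: bij_def)
  define s where "s = inv p"
  have ps: "p (s j) = j" for j unfolding s_def using surjp by (simp add: surj_f_inv_f)
  have bij: "bij s" unfolding s_def using bijp by (rule bij_imp_bij_inv)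
  have inj: "inj s" using bij by (simp add: bij_def)
  define b' where "b' j = b (s j)" for j
  have lf: "f x (s j) = (x j = b' j)" for x j by (simp add: lfp ps b'_def)
  note props = LF_props[OF bij lf]
  have orb: "\<forall>i j. \<exists>n. (s^^n) i = j"
  proof (rule ccontr)
    assume "\<not> (\<forall>i j. \<exists>n. (s^^n) i = j)"
    then obtain i j where nij: "\<And>n. (s^^n) i \<noteq> j" by blast
    define C where "C = {k. \<exists>n. (s^^n) i = k}"
    have "(s^^0) i = i" by simp
    then have iC: "i \<in> C" unfolding C_def by blast
    have jC: "j \<notin> C" unfolding C_def using nij by simp
    have ij: "i \<noteq> j" using iC jC by blast
    have sub: "s ` C \<subseteq> C"
    proof
      fix k assume "k \<in> s ` C"
      then obtain n where "k = s ((s^^n) i)" unfolding C_def by blast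
      then have "k = (s^^(Suc n)) i" by simp
      then show "k \<in> C" unfolding C_def by blast
    qed
    have sC: "s ` C = C" by (rule endo_inj_surj[OF finite sub inj_on_subset[OF inj subset_UNIV]])
    have parC: "odd (card {k\<in>C. conjugate f x k}) = odd (card {k\<in>C. \<not> b' k})" for x
      by (rule LF_par[OF inj finite sC lf])
    have inrg: "\<exists>x. conjugate f x = y" if "odd (weight y) = q" for y
    proof -
      have "y \<in> range (conjugate f)" using rg that by simp
      then show ?thesis by (metis imageE)
    qed
    have key: "odd (card {k\<in>C. y k}) = odd (card {k\<in>C. \<not> b' k})" if hy: "odd (weight y) = q" for y
    proof -
      obtain x where "conjugate f x = y" using inrg[OF hy] by blast
      then show ?thesis using parC[of x] by simp
    qed
    show False
    proof (cases q)
      case True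
      have w1: "weight (\<lambda>k. k = i) = 1" by (simp add: weight_def)
      have w2: "weight (\<lambda>k. k = j) = 1" by (simp add: weight_def)
      have c1: "{k\<in>C. k = i} = {i}" using iC by auto
      have c2: "{k\<in>C. k = j} = {}" using jC by auto
      show False using key[of "\<lambda>k. k = i"] key[of "\<lambda>k. k = j"] w1 w2 c1 c2 True by simp
    next
      case False
      have w1: "weight (\<lambda>k. k = i \<or> k = j) = 2"
      proof -
        have "{k. k = i \<or> k = j} = {i, j}" by auto
        then show ?thesis using ij by (simp add: weight_def)
      qed
      have w2: "weight (\<lambda>k::'v. False) = 0" by (simp add: weight_def)
      have c1: "{k\<in>C. k = i \<or> k = j} = {i}" using iC jC by auto
      show False using key[of "\<lambda>k. k = i \<or> k = j"] key[of "\<lambda>k. False"] w1 w2 c1 False by simp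
    qed
  qed
  have H: "hamiltonian_cycle_succ f s"
    unfolding hamiltonian_cycle_succ_def using props(1,2) orb by blast
  have negc: "{j. neg_arc f j (s j)} = {j. \<not> b' j}" using props(5) by blast
  have sU: "s ` UNIV = UNIV" using bij by (simp add: bij_def)
  have "odd (weight (conjugate f x)) = odd (card {j. \<not> b' j})" for x
    using LF_par[OF inj finite_UNIV sU lf, of x] by (simp add: weight_def)
  then have "odd (card {j. neg_arc f j (s j)}) = q" using inr negc by metis
  then show ?thesis using H by blast
qed


lemma main:
  fixes f :: "('v::finite \<Rightarrow> bool) \<Rightarrow> ('v \<Rightarrow> bool)"
  shows "(\<exists>s. hamiltonian_cycle_succ f s \<and> odd (card {j. neg_arc f j (s j)}) = q) \<longleftrightarrow>
     (self_dual f \<and> and_net f \<and> range (conjugate f) = {z. odd (weight z) = q})"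
proof
  assume "\<exists>s. hamiltonian_cycle_succ f s \<and> odd (card {j. neg_arc f j (s j)}) = q"
  then obtain s where "hamiltonian_cycle_succ f s" "odd (card {j. neg_arc f j (s j)}) = q" by blast
  then show "self_dual f \<and> and_net f \<and> range (conjugate f) = {z. odd (weight z) = q}"
    using fwd[of f s] by simp
next
  assume "self_dual f \<and> and_net f \<and> range (conjugate f) = {z. odd (weight z) = q}"
  then show "\<exists>s. hamiltonian_cycle_succ f s \<and> odd (card {j. neg_arc f j (s j)}) = q"
    using bwd[of f q] by blast
qed

theorem proposition6:
  fixes f :: "('v::finite \<Rightarrow> bool) \<Rightarrow> ('v \<Rightarrow> bool)"
  shows "(positive_circular f \<longleftrightarrow> even_self_dual f \<and> and_net f) \<and>
         (negative_circular f \<longleftrightarrow> odd_self_dual f \<and> and_net f)"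
proof
  have e: "{x. even_point x} = {z::'v\<Rightarrow>bool. odd (weight z) = False}" by (simp add: even_point_def)
  have "positive_circular f \<longleftrightarrow> (\<exists>s. hamiltonian_cycle_succ f s \<and> odd (card {j. neg_arc f j (s j)}) = False)"
    unfolding positive_circular_def by simp
  also have "\<dots> \<longleftrightarrow> (self_dual f \<and> and_net f \<and> range (conjugate f) = {z. odd (weight z) = False})"
    by (rule main)
  finally show "positive_circular f \<longleftrightarrow> even_self_dual f \<and> and_net f"
    unfolding even_self_dual_def even_net_def e by blast
next
  have o: "{x. odd_point x} = {z::'v\<Rightarrow>bool. odd (weight z) = True}" by (simp add: odd_point_def)
  have "negative_circular f \<longleftrightarrow> (\<exists>s. hamiltonian_cycle_succ f s \<and> odd (card {j. neg_arc f j (s j)}) = True)"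
    unfolding negative_circular_def by simp
  also have "\<dots> \<longleftrightarrow> (self_dual f \<and> and_net f \<and> range (conjugate f) = {z. odd (weight z) = True})"
    by (rule main)
  finally show "negative_circular f \<longleftrightarrow> odd_self_dual f \<and> and_net f"
    unfolding odd_self_dual_def odd_net_def o by blast
qed

end
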